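(* Let $n\ge 4$, $N=\{1,\dots,n\}$, fix $i_1\in N$ and let $\hat N^c=N\setminus\{i_1\}$. Then the inequality $$\sum_{j\in\hat N^c}\left(x_{i_1j}+x_{ji_1}\right)-\sum_{j,j'\in\hat N^c:\,j\ne j'} x_{jj'}\le 2-\frac{(n-2)(n-3)}{2}$$ defines a facet of the weak order polytope $P^n_{WO}$.
   Context: Let $N=\{1,\dots,n\}$ and $A_N=\{(i,j): i,j\in N, i\ne j\}$. A weak order on $N$ is a binary relation $W\subseteq N\times N$ that is reflexive, transitive and total; $(i,j)\in W$ is read "$i$ is preferred over or tied with $j$". The characteristic vector of $W$ is $x^W\in\{0,1\}^{A_N}$ with $x^W_{(i,j)}=1$ if $(i,j)\in W$ and $0$ otherwise. The weak order polytope $P^n_{WO}$ is the convex hull of the characteristic vectors of all weak orders on $N$; its points are vectors $x\in\mathbb{R}^{A_N}$ and $x_{ij}$ denotes the coordinate $x_{(i,j)}$. $P^n_{WO}$ has dimension $n(n-1)$. An inequality $\pi x\le\pi_0$ defines a facet of a polytope $P$ if it is valid for $P$ (holds for all $x\in P$) and the face $P\cap\{x:\pi x=\pi_0\}$ is nonempty, proper, and contains $\dim(P)$ affinely independent points (i.e. has dimension $\dim(P)-1$). *)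

theory Defs
  imports Main "HOL-Library.Function_Algebras" Complex_Main
begin

definition arcs :: "nat \<Rightarrow> (nat \<times> nat) set" where
  "arcs n = {(i,j). i \<in> {1..n} \<and> j \<in> {1..n} \<and> i \<noteq> j}"

definition weak_order :: "nat \<Rightarrow> (nat \<times> nat) set \<Rightarrow> bool" where
  "weak_order n W \<longleftrightarrow> W \<subseteq> {1..n} \<times> {1..n} \<and> refl_on {1..n} W \<and> trans W
     \<and> total_on {1..n} W"

text \<open>Points of R^{A_N} are functions (nat*nat) => real vanishing outside A_N.\<close>
definition char_vec :: "nat \<Rightarrow> (nat \<times> nat) set \<Rightarrow> (nat \<times> nat \<Rightarrow> real)" where
  "char_vec n W = (\<lambda>a. if a \<in> arcs n \<and> a \<in> W then 1 else 0)"

definition conv_hull :: "('a \<Rightarrow> real) set \<Rightarrow> ('a \<Rightarrow> real) set" where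
  "conv_hull S = {x. \<exists>T c. finite T \<and> T \<subseteq> S \<and> T \<noteq> {} \<and> (\<forall>t\<in>T. c t \<ge> 0)
      \<and> (\<Sum>t\<in>T. c t) = 1 \<and> x = (\<lambda>a. \<Sum>t\<in>T. c t * t a)}"

definition aff_indep :: "('a \<Rightarrow> real) set \<Rightarrow> bool" where
  "aff_indep T \<longleftrightarrow> finite T \<and> (\<forall>\<mu>. (\<Sum>t\<in>T. \<mu> t) = 0 \<and> (\<forall>a. (\<Sum>t\<in>T. \<mu> t * t a) = 0)
      \<longrightarrow> (\<forall>t\<in>T. \<mu> t = 0))"

definition pdim :: "('a \<Rightarrow> real) set \<Rightarrow> nat" where
  "pdim P = (GREATEST k. \<exists>T. T \<subseteq> P \<and> aff_indep T \<and> card T = k) - 1"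

definition weak_order_polytope :: "nat \<Rightarrow> (nat \<times> nat \<Rightarrow> real) set" where
  "weak_order_polytope n = conv_hull {char_vec n W | W. weak_order n W}"

definition defines_facet ::
  "nat \<Rightarrow> (nat \<times> nat \<Rightarrow> real) \<Rightarrow> real \<Rightarrow> (nat \<times> nat \<Rightarrow> real) set \<Rightarrow> bool" where
  "defines_facet n \<pi> \<pi>0 P \<longleftrightarrow>
     (let F = {x \<in> P. (\<Sum>a\<in>arcs n. \<pi> a * x a) = \<pi>0} in
       (\<forall>x\<in>P. (\<Sum>a\<in>arcs n. \<pi> a * x a) \<le> \<pi>0) \<and> F \<noteq> {} \<and> F \<noteq> P \<and>
       (\<exists>T. T \<subseteq> F \<and> aff_indep T \<and> card T = pdim P))"

end

theory Submission
  imports Defs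
begin

lemma elim_lemma:
  fixes v :: "'i \<Rightarrow> 'c \<Rightarrow> real"
  assumes "finite A"
  shows "finite I \<Longrightarrow> card A < card I \<Longrightarrow>
     \<exists>\<mu>. (\<exists>i\<in>I. \<mu> i \<noteq> 0) \<and> (\<forall>a\<in>A. (\<Sum>i\<in>I. \<mu> i * v i a) = 0)"
  using assms
proof (induction A arbitrary: I v rule: finite_induct)
  case empty
  then obtain i where "i \<in> I" by fastforce
  then show ?case by (rule_tac x="\<lambda>_. 1" in exI) auto
next
  case (insert a A)
  show ?case
  proof (cases "\<forall>i\<in>I. v i a = 0")
    case True
    have "card A < card I" using insert by simp
    from insert.IH[OF insert.prems(1) this] obtain \<mu> where
      "\<exists>i\<in>I. \<mu> i \<noteq> 0" "\<forall>b\<in>A. (\<Sum>i\<in>I. \<mu> i * v i b) = 0" by blast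
    then show ?thesis using True by (rule_tac x=\<mu> in exI) auto
  next
    case False
    then obtain i0 where i0: "i0 \<in> I" "v i0 a \<noteq> 0" by auto
    define I' where "I' = I - {i0}"
    define w where "w = (\<lambda>i b. v i b - v i a / v i0 a * v i0 b)"
    have fI': "finite I'" using insert I'_def by simp
    have "card A < card I'" using insert i0 I'_def by simp
    from insert.IH[OF fI' this] obtain \<mu>' where
      nz: "\<exists>i\<in>I'. \<mu>' i \<noteq> 0" and eq: "\<forall>b\<in>A. (\<Sum>i\<in>I'. \<mu>' i * w i b) = 0" by blast
    define \<mu> where "\<mu> = (\<lambda>i. if i = i0 then - (\<Sum>j\<in>I'. \<mu>' j * v j a) / v i0 a else \<mu>' i)"
    have key: "(\<Sum>i\<in>I. \<mu> i * v i b) = (\<Sum>i\<in>I'. \<mu>' i * w i b)" for b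
    proof -
      have "(\<Sum>i\<in>I. \<mu> i * v i b) = \<mu> i0 * v i0 b + (\<Sum>i\<in>I'. \<mu> i * v i b)"
        using i0 insert.prems(1) I'_def by (simp add: sum.remove)
      also have "(\<Sum>i\<in>I'. \<mu> i * v i b) = (\<Sum>i\<in>I'. \<mu>' i * v i b)"
        using I'_def \<mu>_def by (intro sum.cong) auto
      also have "(\<Sum>i\<in>I'. \<mu>' i * w i b) = (\<Sum>i\<in>I'. \<mu>' i * v i b) - (\<Sum>j\<in>I'. \<mu>' j * v j a) / v i0 a * v i0 b"
        unfolding w_def by (simp add: algebra_simps sum_subtractf sum_distrib_left sum_divide_distrib sum_distrib_right)
      ultimately show ?thesis using \<mu>_def i0 by (simp add: algebra_simps)
    qed
    have wa: "w i a = 0" for i using i0 unfolding w_def by simp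
    show ?thesis
    proof (rule exI[of _ \<mu>], intro conjI ballI)
      show "\<exists>i\<in>I. \<mu> i \<noteq> 0" using nz I'_def \<mu>_def by auto
    next
      fix b assume "b \<in> insert a A"
      then show "(\<Sum>i\<in>I. \<mu> i * v i b) = 0" using key eq wa by auto
    qed
  qed
qed

lemma aff_indep_empty: "aff_indep {}"
  unfolding aff_indep_def by simp

lemma aff_indep_subset:
  assumes "aff_indep T" "U \<subseteq> T" shows "aff_indep U"
proof -
  have fT: "finite T" using assms unfolding aff_indep_def by simp
  have fU: "finite U" using fT assms(2) finite_subset by blast
  show ?thesis unfolding aff_indep_def
  proof (intro conjI fU allI impI ballI)
    fix \<mu> t assume H: "(\<Sum>t\<in>U. \<mu> t) = 0 \<and> (\<forall>a. (\<Sum>t\<in>U. \<mu> t * t a) = 0)" and t: "t \<in> U"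
    define \<mu>' where "\<mu>' = (\<lambda>t. if t \<in> U then \<mu> t else 0)"
    have s1: "(\<Sum>t\<in>T. \<mu>' t) = (\<Sum>t\<in>U. \<mu> t)"
      unfolding \<mu>'_def by (rule sum.mono_neutral_cong_right[OF fT assms(2)]) auto
    have s2: "(\<Sum>t\<in>T. \<mu>' t * t a) = (\<Sum>t\<in>U. \<mu> t * t a)" for a
      unfolding \<mu>'_def by (rule sum.mono_neutral_cong_right[OF fT assms(2)]) auto
    have "\<forall>t\<in>T. \<mu>' t = 0" using assms(1) H s1 s2 unfolding aff_indep_def by auto
    then have "\<mu>' t = 0" using t assms(2) by auto
    then show "\<mu> t = 0" using t unfolding \<mu>'_def by simp
  qed
qed

lemma aff_indep_card_le:
  assumes fA: "finite A" and ai: "aff_indep T" and van: "\<forall>t\<in>T. \<forall>a. a \<notin> A \<longrightarrow> t a = 0"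
  shows "card T \<le> card A + 1"
proof (rule ccontr)
  assume neg: "\<not> card T \<le> card A + 1"
  define C where "C = insert None (Some ` A)"
  have fC: "finite C" using fA C_def by simp
  have cC: "card C = card A + 1" using fA C_def by (simp add: card_image)
  have fT: "finite T" using ai unfolding aff_indep_def by simp
  have "card C < card T" using cC neg by simp
  from elim_lemma[OF fC fT this, of "\<lambda>t e. case e of None \<Rightarrow> 1 | Some a \<Rightarrow> t a"]
  obtain \<mu> where nz: "\<exists>t\<in>T. \<mu> t \<noteq> 0" and
    eq: "\<forall>e\<in>C. (\<Sum>t\<in>T. \<mu> t * (case e of None \<Rightarrow> 1 | Some a \<Rightarrow> t a)) = 0" by blast
  have e1: "(\<Sum>t\<in>T. \<mu> t) = 0" using eq C_def by auto
  have e2: "(\<Sum>t\<in>T. \<mu> t * t a) = 0" for a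
  proof (cases "a \<in> A")
    case True then show ?thesis using eq C_def by auto
  next
    case False then show ?thesis using van by (intro sum.neutral) auto
  qed
  then show False using ai e1 nz unfolding aff_indep_def by blast
qed

lemma aff_indep_insert:
  assumes ai: "aff_indep T" and onT: "\<forall>t\<in>T. (\<Sum>a\<in>A. \<pi> a * t a) = p0"
    and off: "(\<Sum>a\<in>A. \<pi> a * p a) \<noteq> p0"
  shows "aff_indep (insert p T)" "p \<notin> T"
proof -
  show pT: "p \<notin> T" using onT off by auto
  have fT: "finite T" using ai unfolding aff_indep_def by simp
  show "aff_indep (insert p T)" unfolding aff_indep_def
  proof (intro conjI allI impI ballI)
    show "finite (insert p T)" using fT by simp
    fix \<mu> t assume H: "(\<Sum>t\<in>insert p T. \<mu> t) = 0 \<and> (\<forall>a. (\<Sum>t\<in>insert p T. \<mu> t * t a) = 0)"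
      and t: "t \<in> insert p T"
    have h1: "\<mu> p + (\<Sum>t\<in>T. \<mu> t) = 0" using H fT pT by simp
    have h2: "\<mu> p * p a + (\<Sum>t\<in>T. \<mu> t * t a) = 0" for a using H fT pT by simp
    have "0 = (\<Sum>a\<in>A. \<pi> a * (\<mu> p * p a + (\<Sum>t\<in>T. \<mu> t * t a)))" using h2 by simp
    also have "\<dots> = \<mu> p * (\<Sum>a\<in>A. \<pi> a * p a) + (\<Sum>t\<in>T. \<mu> t * (\<Sum>a\<in>A. \<pi> a * t a))"
    proof -
      have "(\<Sum>a\<in>A. \<pi> a * (\<mu> p * p a + (\<Sum>t\<in>T. \<mu> t * t a)))
          = (\<Sum>a\<in>A. \<mu> p * (\<pi> a * p a)) + (\<Sum>a\<in>A. (\<Sum>t\<in>T. \<mu> t * (\<pi> a * t a)))"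
        by (simp add: distrib_left sum.distrib sum_distrib_left mult.left_commute)
      also have "\<dots> = \<mu> p * (\<Sum>a\<in>A. \<pi> a * p a) + (\<Sum>t\<in>T. \<mu> t * (\<Sum>a\<in>A. \<pi> a * t a))"
        by (simp add: sum_distrib_left sum.swap[of _ A T])
      finally show ?thesis .
    qed
    also have "\<dots> = \<mu> p * (\<Sum>a\<in>A. \<pi> a * p a) + (\<Sum>t\<in>T. \<mu> t) * p0"
      using onT by (simp add: sum_distrib_right)
    also have "\<dots> = \<mu> p * ((\<Sum>a\<in>A. \<pi> a * p a) - p0)"
    proof -
      have "(\<Sum>t\<in>T. \<mu> t) = - \<mu> p" using h1 by linarith
      then show ?thesis by (simp add: algebra_simps)
    qed
    finally have mp: "\<mu> p = 0" using off by simp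
    have "\<forall>t\<in>T. \<mu> t = 0" using ai unfolding aff_indep_def using h1 h2 mp by auto
    then show "\<mu> t = 0" using t mp by auto
  qed
qed

lemma extract_basis:
  fixes S :: "('a \<Rightarrow> real) set" and A :: "'a set" and \<pi> :: "'a \<Rightarrow> real"
  assumes fS: "finite S" and fA: "finite A" and ne: "S \<noteq> {}" and pinz: "\<exists>a\<in>A. \<pi> a \<noteq> 0"
  and H: "\<And>c c0. \<forall>s\<in>S. (\<Sum>a\<in>A. c a * s a) = c0 \<Longrightarrow> \<exists>l. \<forall>a\<in>A. c a = l * \<pi> a"
  shows "\<exists>T\<subseteq>S. aff_indep T \<and> card T = card A"
proof -
  define G where "G = card ` {T. T \<subseteq> S \<and> aff_indep T}"
  have fG: "finite G" unfolding G_def using fS by simp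
  have "0 \<in> G" unfolding G_def using aff_indep_empty by force
  define k where "k = Max G"
  have "k \<in> G" unfolding k_def using fG \<open>0 \<in> G\<close> by (intro Max_in) auto
  then obtain B where B: "B \<subseteq> S" "aff_indep B" "card B = k" unfolding G_def by auto
  have maxk: "card T \<le> k" if "T \<subseteq> S" "aff_indep T" for T
    unfolding k_def using fG that G_def by (intro Max_ge) auto
  have fB: "finite B" using B(2) unfolding aff_indep_def by simp
  have "card A \<le> card B"
  proof (rule ccontr)
    assume neg: "\<not> card A \<le> card B"
    define I where "I = insert None (Some ` A)"
    define E where "E = insert None (Some ` B)"
    define v where "v = (\<lambda>i e. case i of None \<Rightarrow> (case e of None \<Rightarrow> 0 | Some b \<Rightarrow> -1)
         | Some a \<Rightarrow> (case e of None \<Rightarrow> \<pi> a | Some (b::'a\<Rightarrow>real) \<Rightarrow> b a))"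
    have fE: "finite E" "finite I" using fB fA E_def I_def by auto
    have "card E < card I" using neg fB fA unfolding E_def I_def by (simp add: card_image)
    from elim_lemma[OF fE this, of v] obtain \<mu> where
      nz: "\<exists>i\<in>I. \<mu> i \<noteq> 0" and eq: "\<forall>e\<in>E. (\<Sum>i\<in>I. \<mu> i * v i e) = 0" by blast
    define c where "c = (\<lambda>a. \<mu> (Some a))"
    define c0 where "c0 = \<mu> None"
    have sumI: "(\<Sum>i\<in>I. \<mu> i * v i e) = \<mu> None * v None e + (\<Sum>a\<in>A. c a * v (Some a) e)" for e
      unfolding I_def c_def using fA by (simp add: sum.reindex)
    have i1: "(\<Sum>a\<in>A. c a * b a) = c0" if "b \<in> B" for b
      using eq[rule_format, of "Some b"] that sumI[of "Some b"] unfolding E_def v_def c0_def by simp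
    have i2: "(\<Sum>a\<in>A. c a * \<pi> a) = 0"
      using eq[rule_format, of None] sumI[of None] unfolding E_def v_def by simp
    have i3: "(\<Sum>a\<in>A. c a * s a) = c0" if s: "s \<in> S" for s
    proof (cases "s \<in> B")
      case True then show ?thesis using i1 by simp
    next
      case False
      have "card (insert s B) = k + 1" using False fB B by simp
      then have "\<not> aff_indep (insert s B)" using maxk[of "insert s B"] B s by auto
      then obtain \<mu>' where h1: "(\<Sum>t\<in>insert s B. \<mu>' t) = 0"
        and h2: "\<forall>a. (\<Sum>t\<in>insert s B. \<mu>' t * t a) = 0" and h3: "\<exists>t\<in>insert s B. \<mu>' t \<noteq> 0"
        unfolding aff_indep_def using fB by auto
      have g1: "\<mu>' s + (\<Sum>t\<in>B. \<mu>' t) = 0" using h1 fB False by simp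
      have g2: "\<mu>' s * s a + (\<Sum>t\<in>B. \<mu>' t * t a) = 0" for a using h2 fB False by simp
      have ms: "\<mu>' s \<noteq> 0"
      proof
        assume z: "\<mu>' s = 0"
        then have "\<forall>t\<in>B. \<mu>' t = 0" using B(2) g1 g2 unfolding aff_indep_def by auto
        then show False using h3 z by auto
      qed
      have "0 = (\<Sum>a\<in>A. c a * (\<mu>' s * s a + (\<Sum>t\<in>B. \<mu>' t * t a)))" using g2 by simp
      also have "\<dots> = (\<Sum>a\<in>A. \<mu>' s * (c a * s a)) + (\<Sum>a\<in>A. (\<Sum>t\<in>B. \<mu>' t * (c a * t a)))"
        by (simp add: distrib_left sum.distrib sum_distrib_left mult.left_commute)
      also have "\<dots> = \<mu>' s * (\<Sum>a\<in>A. c a * s a) + (\<Sum>t\<in>B. \<mu>' t * (\<Sum>a\<in>A. c a * t a))"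
        by (simp add: sum_distrib_left sum.swap[of _ A B])
      also have "\<dots> = \<mu>' s * (\<Sum>a\<in>A. c a * s a) + (\<Sum>t\<in>B. \<mu>' t) * c0"
        using i1 by (simp add: sum_distrib_right)
      also have "\<dots> = \<mu>' s * ((\<Sum>a\<in>A. c a * s a) - c0)"
      proof -
        have "(\<Sum>t\<in>B. \<mu>' t) = - \<mu>' s" using g1 by linarith
        then show ?thesis by (simp add: algebra_simps)
      qed
      finally show ?thesis using ms by simp
    qed
    obtain l where l: "\<forall>a\<in>A. c a = l * \<pi> a" using H[of c c0] i3 by blast
    have "0 = (\<Sum>a\<in>A. l * (\<pi> a * \<pi> a))" using i2 l by (simp add: mult.assoc)
    also have "\<dots> = l * (\<Sum>a\<in>A. \<pi> a * \<pi> a)" by (simp add: sum_distrib_left)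
    finally have "l * (\<Sum>a\<in>A. \<pi> a * \<pi> a) = 0" by simp
    moreover have "(\<Sum>a\<in>A. \<pi> a * \<pi> a) > 0"
    proof -
      obtain a0 where "a0 \<in> A" "\<pi> a0 \<noteq> 0" using pinz by blast
      then show ?thesis using fA
        by (intro sum_pos2[of A a0]) (auto simp: zero_less_mult_iff)
    qed
    ultimately have l0: "l = 0" by simp
    then have cz: "\<forall>a\<in>A. c a = 0" using l by simp
    obtain s0 where "s0 \<in> S" using ne by blast
    then have "c0 = 0" using i3[of s0] cz by simp
    then have "\<forall>i\<in>I. \<mu> i = 0" using cz unfolding I_def c_def c0_def by auto
    then show False using nz by blast
  qed
  then obtain T where "T \<subseteq> B" "card T = card A" by (meson obtain_subset_with_card_n)
  then show ?thesis using B aff_indep_subset[OF B(2)] by blast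
qed

definition piF :: "nat \<Rightarrow> nat \<times> nat \<Rightarrow> real" where
  "piF i1 = (\<lambda>(i,j). if i = i1 \<or> j = i1 then 1 else -1)"

lemma piF_eq: "piF i1 a = (if fst a = i1 \<or> snd a = i1 then 1 else -1)"
  unfolding piF_def by (cases a) auto

lemma piF_swap: "piF i1 (prod.swap a) = piF i1 a"
  unfolding piF_eq by (cases a) auto

lemma arcs_sub: "arcs n \<subseteq> {1..n} \<times> {1..n}"
  unfolding arcs_def by auto

lemma finite_arcs: "finite (arcs n)"
  using arcs_sub finite_subset by blast

lemma arcs_Sigma: "arcs n = Sigma {1..n} (\<lambda>i. {1..n} - {i})"
  unfolding arcs_def by auto

lemma swap_arcs: "prod.swap ` arcs n = arcs n"
  unfolding arcs_def by force

lemma sum_arcs_swap: "(\<Sum>a\<in>arcs n. f a) = (\<Sum>a\<in>arcs n. f (prod.swap a))"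
proof -
  have "(\<Sum>a\<in>arcs n. f a) = (\<Sum>a\<in>prod.swap ` arcs n. f a)" using swap_arcs by simp
  also have "\<dots> = (\<Sum>a\<in>arcs n. f (prod.swap a))"
    by (subst sum.reindex) (auto simp: inj_on_def)
  finally show ?thesis .
qed

lemma K_val:
  assumes "i1 \<in> {1..n}"
  shows "(\<Sum>a\<in>arcs n. piF i1 a) = real (n - 1) * (4 - real n)"
proof -
  have "(\<Sum>a\<in>arcs n. piF i1 a) = (\<Sum>i\<in>{1..n}. \<Sum>j\<in>{1..n} - {i}. piF i1 (i,j))"
    unfolding arcs_Sigma by (subst sum.Sigma) auto
  also have "\<dots> = (\<Sum>j\<in>{1..n} - {i1}. piF i1 (i1,j)) + (\<Sum>i\<in>{1..n} - {i1}. \<Sum>j\<in>{1..n} - {i}. piF i1 (i,j))"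
    using assms by (simp add: sum.remove)
  also have "(\<Sum>j\<in>{1..n} - {i1}. piF i1 (i1,j)) = real (n - 1)"
    using assms by (simp add: piF_eq)
  also have "(\<Sum>i\<in>{1..n} - {i1}. \<Sum>j\<in>{1..n} - {i}. piF i1 (i,j)) = (\<Sum>i\<in>{1..n} - {i1}. 3 - real n)"
  proof (rule sum.cong[OF refl])
    fix i assume i: "i \<in> {1..n} - {i1}"
    have "{1..n} - {i} = insert i1 ({1..n} - {i, i1})" using i assms by auto
    then have "(\<Sum>j\<in>{1..n} - {i}. piF i1 (i,j)) = piF i1 (i,i1) + (\<Sum>j\<in>{1..n} - {i, i1}. piF i1 (i,j))"
      by simp
    also have "(\<Sum>j\<in>{1..n} - {i, i1}. piF i1 (i,j)) = (\<Sum>j\<in>{1..n} - {i, i1}. -1)"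
      using i by (intro sum.cong) (auto simp: piF_eq)
    also have "(\<Sum>j\<in>{1..n} - {i, i1}. (-1::real)) = - real (n - 2)"
    proof -
      have "card ({1..n} - {i, i1}) = n - 2"
        using i assms by (subst card_Diff_subset) auto
      then show ?thesis by simp
    qed
    finally show "(\<Sum>j\<in>{1..n} - {i}. piF i1 (i,j)) = 3 - real n"
      using i assms by (simp add: piF_eq of_nat_diff)
  qed
  also have "\<dots> = real (n - 1) * (3 - real n)" using assms by simp
  finally show ?thesis by (simp add: algebra_simps)
qed

definition tiedA :: "nat \<Rightarrow> (nat \<times> nat) set \<Rightarrow> (nat \<times> nat) set" where
  "tiedA n W = {a \<in> arcs n. a \<in> W \<and> prod.swap a \<in> W}"

lemma sym_val:
  assumes wo: "weak_order n W"
  shows "(\<Sum>a\<in>arcs n. piF i1 a * char_vec n W a)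
     = ((\<Sum>a\<in>arcs n. piF i1 a) + (\<Sum>a\<in>tiedA n W. piF i1 a)) / 2"
proof -
  let ?x = "char_vec n W"
  have tot: "?x a + ?x (prod.swap a) = 1 + (if a \<in> tiedA n W then 1 else 0)" if a: "a \<in> arcs n" for a
  proof -
    obtain i j where ij: "a = (i,j)" by (cases a)
    have "i \<in> {1..n}" "j \<in> {1..n}" "i \<noteq> j" using a ij unfolding arcs_def by auto
    then have "(i,j) \<in> W \<or> (j,i) \<in> W" using wo unfolding weak_order_def total_on_def by auto
    moreover have "(j,i) \<in> arcs n" using a ij unfolding arcs_def by auto
    ultimately show ?thesis using a ij unfolding char_vec_def tiedA_def by auto
  qed
  have "2 * (\<Sum>a\<in>arcs n. piF i1 a * ?x a) = (\<Sum>a\<in>arcs n. piF i1 a * ?x a) + (\<Sum>a\<in>arcs n. piF i1 a * ?x (prod.swap a))"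
    by (subst (2) sum_arcs_swap) (simp add: piF_swap)
  also have "\<dots> = (\<Sum>a\<in>arcs n. piF i1 a * (?x a + ?x (prod.swap a)))"
    by (simp add: sum.distrib distrib_left)
  also have "\<dots> = (\<Sum>a\<in>arcs n. piF i1 a + (if a \<in> tiedA n W then piF i1 a else 0))"
    using tot by (intro sum.cong) (auto simp: distrib_left)
  also have "\<dots> = (\<Sum>a\<in>arcs n. piF i1 a) + (\<Sum>a\<in>tiedA n W. piF i1 a)"
    by (simp add: sum.distrib sum.If_cases finite_arcs tiedA_def Int_def)
  finally show ?thesis by simp
qed

lemma Q_le:
  assumes wo: "weak_order n W" and i1: "i1 \<in> {1..n}"
  shows "(\<Sum>a\<in>tiedA n W. piF i1 a) \<le> 2"
proof -
  define P where "P = (\<lambda>a::nat\<times>nat. fst a = i1 \<or> snd a = i1)"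
  define TS where "TS = {j\<in>{1..n}. j \<noteq> i1 \<and> (i1,j) \<in> W \<and> (j,i1) \<in> W}"
  define k where "k = card TS"
  have fTA: "finite (tiedA n W)" using finite_arcs unfolding tiedA_def by simp
  have fTS: "finite TS" unfolding TS_def by simp
  have "(\<Sum>a\<in>tiedA n W. piF i1 a) = (\<Sum>a\<in>tiedA n W. if P a then 1 else -1)"
    unfolding P_def by (simp add: piF_eq)
  also have "\<dots> = real (card (tiedA n W \<inter> {a. P a})) - real (card (tiedA n W \<inter> - {a. P a}))"
    using fTA by (simp add: sum.If_cases)
  finally have Qe: "(\<Sum>a\<in>tiedA n W. piF i1 a) = real (card (tiedA n W \<inter> {a. P a})) - real (card (tiedA n W \<inter> - {a. P a}))" .
  have e1: "tiedA n W \<inter> {a. P a} = (\<lambda>j. (i1,j)) ` TS \<union> (\<lambda>j. (j,i1)) ` TS"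
    using i1 unfolding tiedA_def P_def TS_def arcs_def by auto
  have c1: "card (tiedA n W \<inter> {a. P a}) = 2 * k"
    unfolding e1 k_def using fTS
    by (subst card_Un_disjoint) (auto simp: card_image inj_on_def TS_def)
  define DD where "DD = TS \<times> TS - (\<lambda>j. (j,j)) ` TS"
  have trW: "trans W" using wo unfolding weak_order_def by simp
  have sub: "DD \<subseteq> tiedA n W \<inter> - {a. P a}"
  proof
    fix a assume a: "a \<in> DD"
    then obtain x y where xy: "a = (x,y)" "x \<in> TS" "y \<in> TS" "x \<noteq> y" unfolding DD_def by auto
    have "(x,y) \<in> W" using xy trW unfolding TS_def trans_def by blast
    moreover have "(y,x) \<in> W" using xy trW unfolding TS_def trans_def by blast
    ultimately show "a \<in> tiedA n W \<inter> - {a. P a}"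
      using xy unfolding tiedA_def P_def TS_def arcs_def by auto
  qed
  have cD: "card DD = k * k - k"
    unfolding DD_def k_def using fTS
    by (subst card_Diff_subset) (auto simp: card_image inj_on_def card_cartesian_product)
  have "card DD \<le> card (tiedA n W \<inter> - {a. P a})"
    using sub fTA by (intro card_mono) auto
  then have le: "real (k * k) - real k \<le> real (card (tiedA n W \<inter> - {a. P a}))"
  proof -
    have "k \<le> k * k" by (cases k) auto
    then have "real (k * k - k) = real (k * k) - real k" by (simp add: of_nat_diff)
    moreover have "k * k - k \<le> card (tiedA n W \<inter> - {a. P a})"
      using \<open>card DD \<le> _\<close> cD by simp
    then have "real (k * k - k) \<le> real (card (tiedA n W \<inter> - {a. P a}))"
      by (simp only: of_nat_le_iff)
    ultimately show ?thesis by linarith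
  qed
  have kk: "3 * k \<le> k * k + 2"
  proof -
    have h: "k \<ge> 3 \<Longrightarrow> 3 * k \<le> k * k" by simp
    show ?thesis
    proof (cases "k \<ge> 3")
      case True then show ?thesis using h by linarith
    next
      case False then have "k = 0 \<or> k = 1 \<or> k = 2" by auto
      then show ?thesis by auto
    qed
  qed
  then have "real (3 * k) \<le> real (k * k + 2)" by (simp only: of_nat_le_iff)
  then show ?thesis using Qe c1 le by simp
qed

definition Wr :: "nat \<Rightarrow> (nat \<Rightarrow> nat) \<Rightarrow> (nat \<times> nat) set" where
  "Wr n r = {(a,b). a \<in> {1..n} \<and> b \<in> {1..n} \<and> r a \<le> r b}"

lemma wo_Wr: "weak_order n (Wr n r)"
  unfolding weak_order_def Wr_def refl_on_def trans_def total_on_def by auto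

lemma tiedA_Wr: "tiedA n (Wr n r) = {a \<in> arcs n. r (fst a) = r (snd a)}"
  unfolding tiedA_def Wr_def arcs_def by auto

lemma char_Wr: "char_vec n (Wr n r) a = (if a \<in> arcs n \<and> r (fst a) \<le> r (snd a) then 1 else 0)"
  unfolding char_vec_def Wr_def arcs_def by (cases a) auto

definition pi0 :: "nat \<Rightarrow> real" where "pi0 n = 2 - real ((n - 2) * (n - 3)) / 2"

lemma pi0_eq: assumes "n \<ge> 4" shows "pi0 n = (real (n - 1) * (4 - real n) + 2) / 2"
proof -
  have "real ((n - 2) * (n - 3)) = (real n - 2) * (real n - 3)" using assms by (simp add: of_nat_diff)
  moreover have "real (n - 1) = real n - 1" using assms by (simp add: of_nat_diff)
  ultimately show ?thesis unfolding pi0_def by (simp add: algebra_simps)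
qed

lemma val_props:
  assumes n: "n \<ge> 4" and i1: "i1 \<in> {1..n}" and wo: "weak_order n W"
  shows "(\<Sum>a\<in>arcs n. piF i1 a * char_vec n W a) \<le> pi0 n"
    and "(\<Sum>a\<in>arcs n. piF i1 a * char_vec n W a) = pi0 n \<longleftrightarrow> (\<Sum>a\<in>tiedA n W. piF i1 a) = 2"
  using sym_val[OF wo, of i1] K_val[OF i1] pi0_eq[OF n] Q_le[OF wo i1] by auto

definition wos where "wos n = {W. weak_order n W}"

lemma finite_wos: "finite (wos n)"
proof -
  have "wos n \<subseteq> Pow ({1..n} \<times> {1..n})" unfolding wos_def weak_order_def by auto
  then show ?thesis by (rule finite_subset) simp
qed

lemma vertex_in_P: "weak_order n W \<Longrightarrow> char_vec n W \<in> weak_order_polytope n"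
  unfolding weak_order_polytope_def conv_hull_def
  by (rule CollectI, rule exI[of _ "{char_vec n W}"], rule exI[of _ "\<lambda>_. 1"]) auto

lemma P_vanish: assumes "x \<in> weak_order_polytope n" "a \<notin> arcs n" shows "x a = 0"
proof -
  obtain T c where T: "T \<subseteq> {char_vec n W | W. weak_order n W}" "x = (\<lambda>a. \<Sum>t\<in>T. c t * t a)"
    using assms(1) unfolding weak_order_polytope_def conv_hull_def by blast
  have "\<forall>t\<in>T. t a = 0" using T(1) assms(2) unfolding char_vec_def by auto
  then show ?thesis using T(2) by (simp add: sum.neutral)
qed

lemma P_valid:
  assumes n: "n \<ge> 4" and i1: "i1 \<in> {1..n}" and x: "x \<in> weak_order_polytope n"
  shows "(\<Sum>a\<in>arcs n. piF i1 a * x a) \<le> pi0 n"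
proof -
  obtain T c where T: "finite T" "T \<subseteq> {char_vec n W | W. weak_order n W}" "\<forall>t\<in>T. c t \<ge> 0"
    "(\<Sum>t\<in>T. c t) = 1" "x = (\<lambda>a. \<Sum>t\<in>T. c t * t a)"
    using x unfolding weak_order_polytope_def conv_hull_def by blast
  have "(\<Sum>a\<in>arcs n. piF i1 a * x a) = (\<Sum>a\<in>arcs n. \<Sum>t\<in>T. c t * (piF i1 a * t a))"
    using T(5) by (simp add: sum_distrib_left mult.left_commute)
  also have "\<dots> = (\<Sum>t\<in>T. c t * (\<Sum>a\<in>arcs n. piF i1 a * t a))"
    by (simp add: sum.swap[of _ "arcs n" T] sum_distrib_left)
  also have "\<dots> \<le> (\<Sum>t\<in>T. c t * pi0 n)"
  proof (rule sum_mono)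
    fix t assume t: "t \<in> T"
    then obtain W where "weak_order n W" "t = char_vec n W" using T(2) by auto
    then have "(\<Sum>a\<in>arcs n. piF i1 a * t a) \<le> pi0 n" using val_props[OF n i1] by simp
    then show "c t * (\<Sum>a\<in>arcs n. piF i1 a * t a) \<le> c t * pi0 n"
      using T(3) t by (simp add: mult_left_mono)
  qed
  also have "\<dots> = pi0 n" using T(4) by (simp add: sum_distrib_right[symmetric])
  finally show ?thesis .
qed

lemma diff2:
  fixes c x1 x2 :: "'a \<Rightarrow> real"
  assumes "finite A" "d1 \<in> A" "d2 \<in> A" "d1 \<noteq> d2" "\<forall>a\<in>A - {d1,d2}. x1 a = x2 a"
  shows "(\<Sum>a\<in>A. c a * x1 a) - (\<Sum>a\<in>A. c a * x2 a) = c d1 * (x1 d1 - x2 d1) + c d2 * (x1 d2 - x2 d2)"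
proof -
  have "(\<Sum>a\<in>A. c a * x1 a) - (\<Sum>a\<in>A. c a * x2 a) = (\<Sum>a\<in>A. c a * (x1 a - x2 a))"
    by (simp add: sum_subtractf right_diff_distrib)
  also have "\<dots> = (\<Sum>a\<in>{d1,d2}. c a * (x1 a - x2 a))"
    using assms by (intro sum.mono_neutral_right) auto
  also have "\<dots> = c d1 * (x1 d1 - x2 d1) + c d2 * (x1 d2 - x2 d2)" using assms(4) by simp
  finally show ?thesis .
qed

definition rA :: "nat \<Rightarrow> nat \<Rightarrow> nat \<Rightarrow> nat \<Rightarrow> nat \<Rightarrow> nat" where
  "rA i1 j p q = (\<lambda>x. if x = i1 \<or> x = j then 0 else if x = p then 1 else if x = q then 2 else x + 3)"
definition rB :: "nat \<Rightarrow> nat \<Rightarrow> nat \<Rightarrow> nat \<Rightarrow> nat" where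
  "rB i1 j k = (\<lambda>x. if x = i1 \<or> x = j then 0 else if x = k then 1 else x + 2)"
definition rC :: "nat \<Rightarrow> nat \<Rightarrow> nat \<Rightarrow> nat \<Rightarrow> nat" where
  "rC i1 j k = (\<lambda>x. if x = i1 \<or> x = j \<or> x = k then 0 else x + 2)"
definition rD :: "nat \<Rightarrow> nat \<Rightarrow> nat \<Rightarrow> nat \<Rightarrow> nat" where
  "rD i1 j k = (\<lambda>x. if x = k then 0 else if x = i1 \<or> x = j then 1 else x + 2)"

lemma Q2:
  assumes "j \<noteq> i1" "tiedA n W = {(i1,j),(j,i1)}"
  shows "(\<Sum>a\<in>tiedA n W. piF i1 a) = 2"
  using assms by (simp add: piF_eq)

lemma Q3:
  assumes "j \<noteq> i1" "k \<noteq> i1" "j \<noteq> k" "tiedA n W = {(i1,j),(j,i1),(i1,k),(k,i1),(j,k),(k,j)}"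
  shows "(\<Sum>a\<in>tiedA n W. piF i1 a) = 2"
  using assms by (simp add: piF_eq)


lemma rA_eq: "rA i1 j p q x = rA i1 j p q y \<Longrightarrow> x = y \<or> ((x = i1 \<or> x = j) \<and> (y = i1 \<or> y = j))"
  unfolding rA_def by (simp split: if_splits)

lemma tied_rA:
  assumes "i1 \<in> {1..n}" "j \<in> {1..n}" "j \<noteq> i1"
  shows "tiedA n (Wr n (rA i1 j p q)) = {(i1,j),(j,i1)}"
proof (intro equalityI subsetI)
  fix a assume a: "a \<in> tiedA n (Wr n (rA i1 j p q))"
  then obtain x y where xy: "a = (x,y)" "x \<noteq> y" "rA i1 j p q x = rA i1 j p q y"
    unfolding tiedA_Wr arcs_def by auto
  then show "a \<in> {(i1,j),(j,i1)}" using rA_eq[OF xy(3)] by auto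
next
  fix a assume "a \<in> {(i1,j),(j,i1)}"
  then show "a \<in> tiedA n (Wr n (rA i1 j p q))" using assms unfolding tiedA_Wr arcs_def rA_def by auto
qed


lemma rB_eq: "rB i1 j k x = rB i1 j k y \<Longrightarrow> x = y \<or> ((x = i1 \<or> x = j) \<and> (y = i1 \<or> y = j))"
  unfolding rB_def by (simp split: if_splits)
lemma rD_eq: "rD i1 j k x = rD i1 j k y \<Longrightarrow> x = y \<or> ((x = i1 \<or> x = j) \<and> (y = i1 \<or> y = j))"
  unfolding rD_def by (simp split: if_splits)
lemma rC_eq: "rC i1 j k x = rC i1 j k y \<Longrightarrow> x = y \<or> ((x = i1 \<or> x = j \<or> x = k) \<and> (y = i1 \<or> y = j \<or> y = k))"
  unfolding rC_def by (simp split: if_splits)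

lemma tied_rB:
  assumes "i1 \<in> {1..n}" "j \<in> {1..n}" "j \<noteq> i1" "k \<noteq> i1" "j \<noteq> k"
  shows "tiedA n (Wr n (rB i1 j k)) = {(i1,j),(j,i1)}"
proof (intro equalityI subsetI)
  fix a assume a: "a \<in> tiedA n (Wr n (rB i1 j k))"
  then obtain x y where xy: "a = (x,y)" "x \<noteq> y" "rB i1 j k x = rB i1 j k y"
    unfolding tiedA_Wr arcs_def by auto
  then show "a \<in> {(i1,j),(j,i1)}" using rB_eq[OF xy(3)] by auto
next
  fix a assume "a \<in> {(i1,j),(j,i1)}"
  then show "a \<in> tiedA n (Wr n (rB i1 j k))" using assms unfolding tiedA_Wr arcs_def rB_def by auto
qed

lemma tied_rD:
  assumes "i1 \<in> {1..n}" "j \<in> {1..n}" "j \<noteq> i1" "k \<noteq> i1" "j \<noteq> k"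
  shows "tiedA n (Wr n (rD i1 j k)) = {(i1,j),(j,i1)}"
proof (intro equalityI subsetI)
  fix a assume a: "a \<in> tiedA n (Wr n (rD i1 j k))"
  then obtain x y where xy: "a = (x,y)" "x \<noteq> y" "rD i1 j k x = rD i1 j k y"
    unfolding tiedA_Wr arcs_def by auto
  then show "a \<in> {(i1,j),(j,i1)}" using rD_eq[OF xy(3)] by auto
next
  fix a assume "a \<in> {(i1,j),(j,i1)}"
  then show "a \<in> tiedA n (Wr n (rD i1 j k))" using assms unfolding tiedA_Wr arcs_def rD_def by auto
qed

lemma tied_rC:
  assumes "i1 \<in> {1..n}" "j \<in> {1..n}" "k \<in> {1..n}" "j \<noteq> i1" "k \<noteq> i1" "j \<noteq> k"
  shows "tiedA n (Wr n (rC i1 j k)) = {(i1,j),(j,i1),(i1,k),(k,i1),(j,k),(k,j)}"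
proof (intro equalityI subsetI)
  fix a assume a: "a \<in> tiedA n (Wr n (rC i1 j k))"
  then obtain x y where xy: "a = (x,y)" "x \<noteq> y" "rC i1 j k x = rC i1 j k y"
    unfolding tiedA_Wr arcs_def by auto
  then show "a \<in> {(i1,j),(j,i1),(i1,k),(k,i1),(j,k),(k,j)}" using rC_eq[OF xy(3)] by auto
next
  fix a assume "a \<in> {(i1,j),(j,i1),(i1,k),(k,i1),(j,k),(k,j)}"
  then show "a \<in> tiedA n (Wr n (rC i1 j k))" using assms unfolding tiedA_Wr arcs_def rC_def by auto
qed

lemma tied_lin: "tiedA n (Wr n (\<lambda>x. x)) = {}"
  unfolding tiedA_Wr arcs_def by auto

lemma agree_gen:
  assumes "\<And>x y. x \<noteq> y \<Longrightarrow> (x,y) \<notin> D \<Longrightarrow> (r1 x \<le> r1 y \<longleftrightarrow> r2 x \<le> r2 y)"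
  shows "\<forall>a\<in>arcs n - D. char_vec n (Wr n r1) a = char_vec n (Wr n r2) a"
proof
  fix a assume a: "a \<in> arcs n - D"
  then obtain x y where xy: "a = (x,y)" "x \<noteq> y" "(x,y) \<notin> D" unfolding arcs_def by auto
  show "char_vec n (Wr n r1) a = char_vec n (Wr n r2) a"
    unfolding char_Wr using assms[OF xy(2,3)] xy(1) by simp
qed

lemma agree_A:
  assumes "p \<noteq> q" "p \<noteq> i1" "q \<noteq> i1" "p \<noteq> j" "q \<noteq> j"
  shows "\<forall>a\<in>arcs n - {(p,q),(q,p)}. char_vec n (Wr n (rA i1 j p q)) a = char_vec n (Wr n (rA i1 j q p)) a"
  by (rule agree_gen) (use assms in \<open>auto simp: rA_def\<close>)

lemma agree_BC:
  assumes "j \<noteq> i1" "k \<noteq> i1" "j \<noteq> k"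
  shows "\<forall>a\<in>arcs n - {(k,i1),(k,j)}. char_vec n (Wr n (rB i1 j k)) a = char_vec n (Wr n (rC i1 j k)) a"
  by (rule agree_gen) (use assms in \<open>auto simp: rB_def rC_def\<close>)

lemma agree_DC:
  assumes "j \<noteq> i1" "k \<noteq> i1" "j \<noteq> k"
  shows "\<forall>a\<in>arcs n - {(i1,k),(j,k)}. char_vec n (Wr n (rD i1 j k)) a = char_vec n (Wr n (rC i1 j k)) a"
  by (rule agree_gen) (use assms in \<open>auto simp: rD_def rC_def\<close>)

lemma H_lemma:
  assumes n: "n \<ge> 4" and i1: "i1 \<in> {1..n}"
  and hyp: "\<forall>s\<in>char_vec n ` {W. weak_order n W \<and> (\<Sum>a\<in>arcs n. piF i1 a * char_vec n W a) = pi0 n}.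
              (\<Sum>a\<in>arcs n. c a * s a) = c0"
  shows "\<exists>l. \<forall>a\<in>arcs n. c a = l * piF i1 a"
proof -
  define R where "R = {1..n} - {i1}"
  have face: "(\<Sum>a\<in>arcs n. c a * char_vec n W a) = c0"
    if "weak_order n W" "(\<Sum>a\<in>tiedA n W. piF i1 a) = 2" for W
    using hyp that val_props(2)[OF n i1 that(1)] by auto
  have cardR: "card R = n - 1" using i1 R_def by simp
  have RN: "x \<in> {1..n}" "x \<noteq> i1" if "x \<in> R" for x using that R_def by auto
  have third: "\<exists>p\<in>R. p \<noteq> j \<and> p \<noteq> k" for j k
  proof -
    have "card R - card {j,k} \<le> card (R - {j,k})" by (rule diff_card_le_card_Diff) simp
    moreover have "card {j,k} \<le> 2" by (simp add: card_insert_le_m1)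
    ultimately have "card (R - {j,k}) > 0" using cardR n by linarith
    then obtain p where "p \<in> R - {j,k}" by (metis card_gt_0_iff ex_in_conv)
    then show ?thesis by auto
  qed
  have arcR: "(x,y) \<in> arcs n" if "x \<in> {1..n}" "y \<in> {1..n}" "x \<noteq> y" for x y
    using that unfolding arcs_def by auto
  have sym: "c (p,q) = c (q,p)" if pq: "p \<in> R" "q \<in> R" "p \<noteq> q" for p q
  proof -
    obtain j where j: "j \<in> R" "j \<noteq> p" "j \<noteq> q" using third by blast
    have f1: "(\<Sum>a\<in>arcs n. c a * char_vec n (Wr n (rA i1 j p q)) a) = c0"
      by (rule face[OF wo_Wr]) (rule Q2[OF RN(2)[OF j(1)] tied_rA[OF i1 RN(1)[OF j(1)] RN(2)[OF j(1)]]])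
    have f2: "(\<Sum>a\<in>arcs n. c a * char_vec n (Wr n (rA i1 j q p)) a) = c0"
      by (rule face[OF wo_Wr]) (rule Q2[OF RN(2)[OF j(1)] tied_rA[OF i1 RN(1)[OF j(1)] RN(2)[OF j(1)]]])
    have d: "(\<Sum>a\<in>arcs n. c a * char_vec n (Wr n (rA i1 j p q)) a) - (\<Sum>a\<in>arcs n. c a * char_vec n (Wr n (rA i1 j q p)) a)
      = c (p,q) * (char_vec n (Wr n (rA i1 j p q)) (p,q) - char_vec n (Wr n (rA i1 j q p)) (p,q))
      + c (q,p) * (char_vec n (Wr n (rA i1 j p q)) (q,p) - char_vec n (Wr n (rA i1 j q p)) (q,p))"
      by (rule diff2[OF finite_arcs arcR arcR _ agree_A])
         (use pq j RN in auto)
    have "(p,q) \<in> arcs n" "(q,p) \<in> arcs n" using pq RN arcR by auto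
    then have "char_vec n (Wr n (rA i1 j p q)) (p,q) = 1" "char_vec n (Wr n (rA i1 j q p)) (p,q) = 0"
      "char_vec n (Wr n (rA i1 j p q)) (q,p) = 0" "char_vec n (Wr n (rA i1 j q p)) (q,p) = 1"
      using pq j RN unfolding char_Wr rA_def by auto
    then show ?thesis using d f1 f2 by simp
  qed
  have step2: "c (k,i1) + c (k,j) = 0" if jk: "j \<in> R" "k \<in> R" "j \<noteq> k" for j k
  proof -
    have f1: "(\<Sum>a\<in>arcs n. c a * char_vec n (Wr n (rB i1 j k)) a) = c0"
      by (rule face[OF wo_Wr]) (rule Q2[OF RN(2)[OF jk(1)] tied_rB[OF i1 RN(1)[OF jk(1)] RN(2)[OF jk(1)] RN(2)[OF jk(2)] jk(3)]])
    have f2: "(\<Sum>a\<in>arcs n. c a * char_vec n (Wr n (rC i1 j k)) a) = c0"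
      by (rule face[OF wo_Wr]) (rule Q3[OF RN(2)[OF jk(1)] RN(2)[OF jk(2)] jk(3) tied_rC[OF i1 RN(1)[OF jk(1)] RN(1)[OF jk(2)] RN(2)[OF jk(1)] RN(2)[OF jk(2)] jk(3)]])
    have d: "(\<Sum>a\<in>arcs n. c a * char_vec n (Wr n (rB i1 j k)) a) - (\<Sum>a\<in>arcs n. c a * char_vec n (Wr n (rC i1 j k)) a)
      = c (k,i1) * (char_vec n (Wr n (rB i1 j k)) (k,i1) - char_vec n (Wr n (rC i1 j k)) (k,i1))
      + c (k,j) * (char_vec n (Wr n (rB i1 j k)) (k,j) - char_vec n (Wr n (rC i1 j k)) (k,j))"
      by (rule diff2[OF finite_arcs arcR arcR _ agree_BC])
         (use jk RN i1 in auto)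
    have "(k,i1) \<in> arcs n" "(k,j) \<in> arcs n" using jk RN arcR i1 by auto
    then have "char_vec n (Wr n (rB i1 j k)) (k,i1) = 0" "char_vec n (Wr n (rC i1 j k)) (k,i1) = 1"
      "char_vec n (Wr n (rB i1 j k)) (k,j) = 0" "char_vec n (Wr n (rC i1 j k)) (k,j) = 1"
      using jk RN unfolding char_Wr rB_def rC_def by auto
    then show ?thesis using d f1 f2 by simp
  qed
  have step3: "c (i1,k) + c (j,k) = 0" if jk: "j \<in> R" "k \<in> R" "j \<noteq> k" for j k
  proof -
    have f1: "(\<Sum>a\<in>arcs n. c a * char_vec n (Wr n (rD i1 j k)) a) = c0"
      by (rule face[OF wo_Wr]) (rule Q2[OF RN(2)[OF jk(1)] tied_rD[OF i1 RN(1)[OF jk(1)] RN(2)[OF jk(1)] RN(2)[OF jk(2)] jk(3)]])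
    have f2: "(\<Sum>a\<in>arcs n. c a * char_vec n (Wr n (rC i1 j k)) a) = c0"
      by (rule face[OF wo_Wr]) (rule Q3[OF RN(2)[OF jk(1)] RN(2)[OF jk(2)] jk(3) tied_rC[OF i1 RN(1)[OF jk(1)] RN(1)[OF jk(2)] RN(2)[OF jk(1)] RN(2)[OF jk(2)] jk(3)]])
    have d: "(\<Sum>a\<in>arcs n. c a * char_vec n (Wr n (rD i1 j k)) a) - (\<Sum>a\<in>arcs n. c a * char_vec n (Wr n (rC i1 j k)) a)
      = c (i1,k) * (char_vec n (Wr n (rD i1 j k)) (i1,k) - char_vec n (Wr n (rC i1 j k)) (i1,k))
      + c (j,k) * (char_vec n (Wr n (rD i1 j k)) (j,k) - char_vec n (Wr n (rC i1 j k)) (j,k))"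
      by (rule diff2[OF finite_arcs arcR arcR _ agree_DC])
         (use jk RN i1 in auto)
    have "(i1,k) \<in> arcs n" "(j,k) \<in> arcs n" using jk RN arcR i1 by auto
    then have "char_vec n (Wr n (rD i1 j k)) (i1,k) = 0" "char_vec n (Wr n (rC i1 j k)) (i1,k) = 1"
      "char_vec n (Wr n (rD i1 j k)) (j,k) = 0" "char_vec n (Wr n (rC i1 j k)) (j,k) = 1"
      using jk RN unfolding char_Wr rD_def rC_def by auto
    then show ?thesis using d f1 f2 by simp
  qed
  obtain j0 where j0: "j0 \<in> R" using third by blast
  define l where "l = c (i1, j0)"
  have key: "c (i1,k) = l" if k: "k \<in> R" for k
  proof (cases "k = j0")
    case True then show ?thesis using l_def by simp
  next
    case False
    have "c (i1,k) + c (j0,k) = 0" using step3[OF j0 k] False by simp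
    moreover have "c (i1,j0) + c (k,j0) = 0" using step3[OF k j0] False by simp
    moreover have "c (j0,k) = c (k,j0)" using sym[OF j0 k] False by simp
    ultimately show ?thesis using l_def by simp
  qed
  show ?thesis
  proof (intro exI[of _ l] ballI)
    fix a assume a: "a \<in> arcs n"
    then obtain x y where xy: "a = (x,y)" "x \<in> {1..n}" "y \<in> {1..n}" "x \<noteq> y" unfolding arcs_def by auto
    show "c a = l * piF i1 a"
    proof (cases "x = i1")
      case True
      then have "y \<in> R" using xy R_def by auto
      then show ?thesis using key xy True by (simp add: piF_eq)
    next
      case xn: False
      then have xR: "x \<in> R" using xy R_def by auto
      show ?thesis
      proof (cases "y = i1")
        case True
        obtain j where j: "j \<in> R" "j \<noteq> x" using third by blast
        have "c (x,i1) + c (x,j) = 0" using step2[OF j(1) xR] j by simp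
        moreover have "c (x,j) = c (j,x)" using sym[OF xR j(1)] j by simp
        moreover have "c (i1,x) + c (j,x) = 0" using step3[OF j(1) xR] j by simp
        ultimately show ?thesis using key[OF xR] xy True by (simp add: piF_eq)
      next
        case False
        then have yR: "y \<in> R" using xy R_def by auto
        have "c (i1,y) + c (x,y) = 0" using step3[OF xR yR] xy by simp
        then show ?thesis using key[OF yR] xy False xn by (simp add: piF_eq)
      qed
    qed
  qed
qed

lemma main_facet:
  assumes n: "n \<ge> 4" and i1: "i1 \<in> {1..n}"
  shows "defines_facet n (piF i1) (pi0 n) (weak_order_polytope n)"
proof -
  define P where "P = weak_order_polytope n"
  define F where "F = {x \<in> P. (\<Sum>a\<in>arcs n. piF i1 a * x a) = pi0 n}"
  define S where "S = char_vec n ` {W. weak_order n W \<and> (\<Sum>a\<in>arcs n. piF i1 a * char_vec n W a) = pi0 n}"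
  define R where "R = {1..n} - {i1}"
  have cardR: "card R = n - 1" using i1 R_def by simp
  have "R \<noteq> {}" using cardR n by (intro notI) simp
  then obtain j where j: "j \<in> R" by blast
  have "card (R - {j}) = n - 2" using j cardR by simp
  then have "R - {j} \<noteq> {}" using n by (intro notI) simp
  then obtain k where k: "k \<in> R" "k \<noteq> j" by blast
  have jN: "j \<in> {1..n}" "j \<noteq> i1" "k \<in> {1..n}" "k \<noteq> i1" using j k R_def by auto
  have valid: "\<forall>x\<in>P. (\<Sum>a\<in>arcs n. piF i1 a * x a) \<le> pi0 n"
    using P_valid[OF n i1] P_def by blast
  have SF: "S \<subseteq> F" unfolding S_def F_def P_def using vertex_in_P by blast
  have fS: "finite S"
  proof -
    have "{W. weak_order n W \<and> (\<Sum>a\<in>arcs n. piF i1 a * char_vec n W a) = pi0 n} \<subseteq> wos n"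
      unfolding wos_def by auto
    then show ?thesis unfolding S_def using finite_wos finite_subset by blast
  qed
  define f0 where "f0 = char_vec n (Wr n (rB i1 j k))"
  have "(\<Sum>a\<in>tiedA n (Wr n (rB i1 j k)). piF i1 a) = 2"
    using Q2[OF jN(2) tied_rB[OF i1 jN(1) jN(2) jN(4)]] k by simp
  then have f0S: "f0 \<in> S" unfolding S_def f0_def using val_props(2)[OF n i1 wo_Wr] wo_Wr by blast
  define p where "p = char_vec n (Wr n (\<lambda>x. x))"
  have pP: "p \<in> P" unfolding p_def P_def by (rule vertex_in_P[OF wo_Wr])
  have pval: "(\<Sum>a\<in>arcs n. piF i1 a * p a) \<noteq> pi0 n"
    using val_props(2)[OF n i1 wo_Wr, of "\<lambda>x. x"] tied_lin unfolding p_def by simp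
  have pinz: "\<exists>a\<in>arcs n. piF i1 a \<noteq> 0"
  proof -
    have "(i1,j) \<in> arcs n" using jN i1 unfolding arcs_def by blast
    then show ?thesis by (rule bexI[rotated]) (simp add: piF_eq)
  qed
  have ne: "S \<noteq> {}" using f0S by blast
  have Hs: "\<exists>l. \<forall>a\<in>arcs n. c a = l * piF i1 a"
    if "\<forall>s\<in>S. (\<Sum>a\<in>arcs n. c a * s a) = c0" for c c0
    by (rule H_lemma[OF n i1 that[unfolded S_def]])
  have "\<exists>T\<subseteq>S. aff_indep T \<and> card T = card (arcs n)"
    by (rule extract_basis[OF fS finite_arcs ne pinz]) (erule Hs)
  then obtain T where T: "T \<subseteq> S" "aff_indep T" "card T = card (arcs n)" by (elim exE conjE)
  have fT: "finite T" by (rule conjunct1[OF T(2)[unfolded aff_indep_def]])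
  have TF: "T \<subseteq> F" using T SF by blast
  have onT: "\<forall>t\<in>T. (\<Sum>a\<in>arcs n. piF i1 a * t a) = pi0 n" using TF unfolding F_def by blast
  have ins: "aff_indep (insert p T)" "p \<notin> T" using aff_indep_insert[OF T(2) onT pval] by auto
  have G: "(GREATEST k. \<exists>T. T \<subseteq> P \<and> aff_indep T \<and> card T = k) = card (arcs n) + 1"
  proof (rule Greatest_equality)
    show "\<exists>T'. T' \<subseteq> P \<and> aff_indep T' \<and> card T' = card (arcs n) + 1"
    proof (intro exI[of _ "insert p T"] conjI)
      show "insert p T \<subseteq> P" using pP TF unfolding F_def by blast
      show "aff_indep (insert p T)" by (rule ins(1))
      show "card (insert p T) = card (arcs n) + 1" using ins(2) fT T(3) by simp
    qed
  next
    fix k assume "\<exists>T. T \<subseteq> P \<and> aff_indep T \<and> card T = k"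
    then obtain T' where "T' \<subseteq> P" "aff_indep T'" "card T' = k" by blast
    moreover have "\<forall>t\<in>T'. \<forall>a. a \<notin> arcs n \<longrightarrow> t a = 0"
      using \<open>T' \<subseteq> P\<close> P_vanish unfolding P_def by blast
    ultimately show "k \<le> card (arcs n) + 1"
      using aff_indep_card_le[OF finite_arcs] by blast
  qed
  have pd: "pdim P = card (arcs n)" unfolding pdim_def G by simp
  have fne: "F \<noteq> {}" using f0S SF by blast
  have fnp: "F \<noteq> P"
  proof
    assume "F = P"
    then have "p \<in> F" using pP by simp
    then show False using pval unfolding F_def by simp
  qed
  have tt: "\<exists>T. T \<subseteq> F \<and> aff_indep T \<and> card T = pdim P"
    using TF T(2,3) pd by (intro exI[of _ T]) simp
  show ?thesis
    unfolding defines_facet_def Let_def P_def[symmetric] F_def[symmetric]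
    using valid fne fnp tt by (intro conjI) assumption+
qed

theorem mainTheorem7:
  fixes n i1 :: nat
  assumes "n \<ge> 4" and "i1 \<in> {1..n}"
  shows "defines_facet n
           (\<lambda>(i,j). if i = i1 \<or> j = i1 then 1 else -1)
           (2 - real ((n - 2) * (n - 3)) / 2)
           (weak_order_polytope n)"
  using main_facet[OF assms] unfolding piF_def pi0_def .

end
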